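(* Let $L_1,\ldots,L_r$, $\Lambda$ and $\mathcal F(\boldsymbol\alpha;P)$ be as follows: $L_i(\mathbf x)=\sum_{j\le n}\lambda_{i,j}x_j$ are real linear forms such that for every $\boldsymbol\alpha\in\mathbb{R}^r\setminus\{\mathbf0\}$ the form $\boldsymbol\alpha\cdot\mathbf L$ does not have all coefficients rational; $\Lambda$ is the $n\times r$ matrix with $(j,i)$ entry $\lambda_{i,j}$; and $\mathcal F(\boldsymbol\alpha;P)=\sup_{q\in\mathbb N,\mathbf a\in\mathbb Z^n}\prod_{v\le n}(q+P|q\lambda_v-a_v|)^{-1}$ with $\boldsymbol\lambda=\Lambda\boldsymbol\alpha$. Let $\theta$ be a small positive real number. Then there exists a function $T:[1,\infty)\to[1,\infty)$, increasing monotonically to infinity, such that $T(P)\le P^\theta$ for all $P$ and \[ \sup_{P^{\theta-1}\le|\Lambda\boldsymbol\alpha|\le T(P)}\mathcal F(\boldsymbol\alpha;P)\le T(P)^{-1}. \]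
   Context: $|\mathbf y|=\max_i|y_i|$ for vectors. *)

theory Defs
  imports "HOL-Analysis.Analysis"
begin

text \<open>Sup norm of a vector: max of absolute values of components.\<close>
definition supnorm :: "real ^ 'n \<Rightarrow> real" where
  "supnorm y = Max (range (\<lambda>v. \<bar>y $ v\<bar>))"

text \<open>Lam is the n x r matrix with (j,i) entry lambda_{i,j}; Lam *v alpha is the
  vector lambda = Lambda alpha.  F(alpha;P) = sup over q in N (q >= 1) and a in Z^n of
  prod_v (q + P |q lambda_v - a_v|)^(-1).\<close>
definition FF :: "real ^ 'r ^ 'n \<Rightarrow> real ^ 'r \<Rightarrow> real \<Rightarrow> real" where
  "FF Lam \<alpha> P = Sup {(\<Prod>v\<in>UNIV. inverse (real q + P * \<bar>real q * (Lam *v \<alpha>) $ v - of_int (a $ v)\<bar>))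
                       | (q::nat) (a::int ^ 'n). q \<ge> 1}"

end

theory Submission
  imports Defs
begin

lemma supnorm_ge: "\<bar>y $ v\<bar> \<le> supnorm y"
  unfolding supnorm_def by (rule Max_ge) auto

lemma supnorm_attained: "\<exists>v. supnorm y = \<bar>y $ v\<bar>"
proof -
  have "supnorm y \<in> range (\<lambda>v. \<bar>y $ v\<bar>)"
    unfolding supnorm_def by (rule Max_in) auto
  then show ?thesis by auto
qed

lemma supnorm_pos_nz: "supnorm y > 0 \<Longrightarrow> y \<noteq> 0"
  using supnorm_attained[of y] by auto

lemma norm_le_supnorm: "norm (y::real^'n) \<le> real CARD('n) * supnorm y"
proof -
  have "norm y \<le> (\<Sum>i\<in>UNIV. \<bar>y$i\<bar>)" by (rule norm_le_l1_cart)
  also have "\<dots> \<le> (\<Sum>i\<in>(UNIV::'n set). supnorm y)" by (rule sum_mono) (rule supnorm_ge)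
  finally show ?thesis by simp
qed

lemma closed_supnorm_le: "closed {y::real^'n. supnorm y \<le> B}"
proof -
  have "{y::real^'n. supnorm y \<le> B} = {y. \<forall>v. \<bar>y$v\<bar> \<le> B}"
  proof (intro set_eqI iffI; clarsimp)
    fix y :: "real^'n" and v assume "supnorm y \<le> B"
    then show "\<bar>y$v\<bar> \<le> B" using supnorm_ge[of y v] by linarith
  next
    fix y :: "real^'n" assume "\<forall>v. \<bar>y$v\<bar> \<le> B"
    then show "supnorm y \<le> B" using supnorm_attained[of y] by metis
  qed
  moreover have "closed {y::real^'n. \<forall>v. \<bar>y$v\<bar> \<le> B}"
    by (intro closed_Collect_all closed_Collect_le continuous_intros)
  ultimately show ?thesis by simp
qed

lemma closed_supnorm_ge: "closed {y::real^'n. B \<le> supnorm y}"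
proof -
  have "{y::real^'n. B \<le> supnorm y} = (\<Union>v. {y. B \<le> \<bar>y$v\<bar>})"
  proof (intro set_eqI iffI; clarsimp)
    fix y :: "real^'n" and v assume "B \<le> \<bar>y$v\<bar>"
    then show "B \<le> supnorm y" using supnorm_ge[of y v] by linarith
  next
    fix y :: "real^'n" assume "B \<le> supnorm y"
    then show "\<exists>v. B \<le> \<bar>y$v\<bar>" using supnorm_attained[of y] by metis
  qed
  moreover have "closed (\<Union>v. {y::real^'n. B \<le> \<bar>y$v\<bar>})"
    by (rule closed_UN) (auto intro!: closed_Collect_le continuous_intros)
  ultimately show ?thesis by simp
qed

lemma prod_le_factor:
  fixes f :: "'a::finite \<Rightarrow> real"
  assumes "\<And>v. 0 \<le> f v \<and> f v \<le> 1"
  shows "prod f UNIV \<le> f w"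
proof -
  have "prod f UNIV = f w * prod f (UNIV - {w})"
    by (simp add: prod.remove)
  also have "\<dots> \<le> f w * 1"
    by (rule mult_left_mono) (use assms in \<open>auto intro: prod_le_1\<close>)
  finally show ?thesis by simp
qed


lemma factor_bounds:
  assumes "q \<ge> (1::nat)" "P \<ge> 0"
  shows "0 \<le> inverse (real q + P * \<bar>x\<bar>) \<and> inverse (real q + P * \<bar>x\<bar>) \<le> 1 / real q"
proof -
  have "real q \<le> real q + P * \<bar>x\<bar>" using assms by simp
  moreover have "real q > 0" using assms by simp
  ultimately show ?thesis
    by (simp add: inverse_eq_divide frac_le)
qed

lemma key:
  fixes S :: "(real^'n) set"
  assumes clS: "closed S" and irr: "\<And>y. y \<in> S \<Longrightarrow> y \<noteq> 0 \<Longrightarrow> \<exists>v. y$v \<notin> \<rat>"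
    and th: "\<theta> > 0" and ep: "\<epsilon> > 0"
  shows "\<exists>P0\<ge>1. \<forall>P\<ge>P0. \<forall>y\<in>S. P powr (\<theta>-1) \<le> supnorm y \<and> supnorm y \<le> B \<longrightarrow>
           (\<forall>q::nat. q \<ge> 1 \<longrightarrow> (\<forall>a::int^'n.
              (\<Prod>v\<in>UNIV. inverse (real q + P * \<bar>real q * y $ v - of_int (a $ v)\<bar>)) \<le> \<epsilon>))"
proof -
  obtain Q :: nat where Q: "1 / \<epsilon> < real Q" using reals_Archimedean2 by blast
  have "1 / \<epsilon> > 0" using ep by simp
  then have Q1: "Q \<ge> 1" using Q by (cases Q) auto
  have "1 < \<epsilon> * real Q" using Q ep by (simp add: field_simps)
  then have Qe: "1 / real Q \<le> \<epsilon>" using Q1 by (simp add: field_simps)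
  define \<eta> where "\<eta> = 1 / (2 * real Q)"
  have eta: "\<eta> > 0" using Q1 by (simp add: \<eta>_def)
  define Y where "Y = S \<inter> {y. \<eta> \<le> supnorm y} \<inter> {y. supnorm y \<le> B}"
  have clY: "closed Y" unfolding Y_def
    by (intro closed_Int clS closed_supnorm_ge closed_supnorm_le)
  have bY: "bounded Y"
  proof -
    have "Y \<subseteq> cball 0 (real CARD('n) * B)"
    proof
      fix y assume "y \<in> Y"
      then have "supnorm y \<le> B" by (simp add: Y_def)
      then have "real CARD('n) * supnorm y \<le> real CARD('n) * B" by (simp add: mult_left_mono)
      then have "norm y \<le> real CARD('n) * B" using norm_le_supnorm[of y] by linarith
      then show "y \<in> cball 0 (real CARD('n) * B)" by simp
    qed
    then show ?thesis using bounded_cball bounded_subset by blast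
  qed
  have cY: "compact Y" using clY bY by (simp add: compact_eq_bounded_closed)
  define Z where "Z = Y \<times> (real ` {1..<Q})"
  define h where "h z = (\<Sum>v\<in>UNIV. infdist (snd z * fst z $ v) \<int>)" for z :: "(real^'n) \<times> real"
  have cZ: "compact Z" unfolding Z_def by (intro compact_Times cY finite_imp_compact) auto
  have ch: "continuous_on Z h" unfolding h_def by (intro continuous_intros)
  have hpos: "h z > 0" if "z \<in> Z" for z
  proof -
    obtain y q where z: "z = (y, real q)" "y \<in> Y" "q \<in> {1..<Q}" using \<open>z \<in> Z\<close> by (auto simp: Z_def)
    have "supnorm y > 0" using z(2) eta by (auto simp: Y_def)
    then have "y \<noteq> 0" by (rule supnorm_pos_nz)
    then obtain v where v: "y $ v \<notin> \<rat>" using irr z(2) by (auto simp: Y_def)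
    have "real q * y $ v \<notin> \<int>"
    proof
      assume "real q * y $ v \<in> \<int>"
      then obtain m where m: "real q * y $ v = of_int m" by (auto elim: Ints_cases)
      have "q > 0" using z by auto
      then have "y $ v = of_int m / real q" using m by (simp add: field_simps)
      then have "y $ v \<in> \<rat>" by simp
      with v show False by simp
    qed
    then have "infdist (real q * y $ v) \<int> > 0"
      by (intro infdist_pos_not_in_closed) auto
    then show ?thesis unfolding h_def z(1)
      by (intro sum_pos2[where i=v]) (auto simp: infdist_nonneg)
  qed
  obtain c where c: "c > 0" "\<And>z. z \<in> Z \<Longrightarrow> c \<le> h z"
  proof (cases "Z = {}")
    case True then show ?thesis using that[of 1] by auto
  next
    case False
    then obtain z0 where "z0 \<in> Z" "\<And>z. z \<in> Z \<Longrightarrow> h z0 \<le> h z"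
      using continuous_attains_inf[OF cZ False ch] by blast
    then show ?thesis using that[of "h z0"] hpos by blast
  qed
  define N where "N = real CARD('n)"
  have N: "N > 0" by (simp add: N_def)
  define P0 where "P0 = max 1 (max ((1/\<epsilon>) powr (1/\<theta>)) (N / (c * \<epsilon>)))"
  show ?thesis
  proof (intro exI[of _ P0] conjI allI impI ballI)
    show "P0 \<ge> 1" by (simp add: P0_def)
    fix P y and q :: nat and a :: "int^'n"
    assume P: "P0 \<le> P" and y: "y \<in> S" and ys: "P powr (\<theta>-1) \<le> supnorm y \<and> supnorm y \<le> B"
      and q: "1 \<le> q"
    have P1: "P \<ge> 1" using P by (simp add: P0_def)
    define f where "f v = inverse (real q + P * \<bar>real q * y $ v - of_int (a $ v)\<bar>)" for v
    have fb: "0 \<le> f v \<and> f v \<le> 1 / real q" for v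
      unfolding f_def using factor_bounds[OF q, of P] P1 by simp
    have fb1: "0 \<le> f v \<and> f v \<le> 1" for v
      using fb[of v] q by (smt (verit) divide_le_eq_1 of_nat_1 of_nat_mono)
    have suff: "\<exists>w. f w \<le> \<epsilon>"
    proof (cases "q \<ge> Q")
      case True
      have "1 / real q \<le> 1 / real Q" using True Q1 by (simp add: frac_le)
      then show ?thesis using fb Qe by (meson order_trans)
    next
      case False
      then have qQ: "q < Q" by simp
      have big: "f w \<le> \<epsilon>" if "P * \<bar>real q * y $ w - of_int (a $ w)\<bar> \<ge> 1/\<epsilon>" for w
      proof -
        have "1/\<epsilon> \<le> real q + P * \<bar>real q * y $ w - of_int (a $ w)\<bar>" using that by simp
        then have "inverse (real q + P * \<bar>real q * y $ w - of_int (a $ w)\<bar>) \<le> inverse (1/\<epsilon>)"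
          using ep by (intro le_imp_inverse_le) auto
        then show ?thesis using ep by (simp add: f_def)
      qed
      show ?thesis
      proof (cases "supnorm y < \<eta>")
        case True
        obtain w where w: "supnorm y = \<bar>y $ w\<bar>" using supnorm_attained by blast
        define s where "s = supnorm y"
        have s0: "s \<ge> P powr (\<theta>-1)" using ys by (simp add: s_def)
        have spos: "s > 0" using s0 P1 by (smt (verit) powr_gt_zero)
        have qs: "real q * s < 1/2"
        proof -
          have "real q * s \<le> real Q * s" using qQ spos by (simp add: mult_right_mono)
          also have "\<dots> < real Q * \<eta>" using True Q1 by (simp add: s_def)
          also have "\<dots> = 1/2" using Q1 by (simp add: \<eta>_def)
          finally show ?thesis .
        qed
        have dist: "\<bar>real q * y $ w - of_int (a $ w)\<bar> \<ge> s"
        proof (cases "a $ w = 0")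
          case True
          then show ?thesis using w q spos by (simp add: s_def abs_mult)
        next
          case False
          then have "\<bar>of_int (a $ w) :: real\<bar> \<ge> 1" by linarith
          moreover have "\<bar>real q * y $ w\<bar> = real q * s" using w by (simp add: s_def abs_mult)
          ultimately have "\<bar>real q * y $ w - of_int (a $ w)\<bar> \<ge> 1 - real q * s" by linarith
          moreover have "real q * s \<ge> s" using q spos by simp
          ultimately show ?thesis using qs by linarith
        qed
        have "P * s \<ge> P * P powr (\<theta> - 1)" using s0 P1 by (simp add: mult_left_mono)
        also have "P * P powr (\<theta> - 1) = P powr \<theta>" using P1
          by (simp add: powr_diff powr_minus field_simps)
        finally have Ps: "P * s \<ge> P powr \<theta>" .
        have "P powr \<theta> \<ge> ((1/\<epsilon>) powr (1/\<theta>)) powr \<theta>"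
          using P th by (intro powr_mono2) (auto simp: P0_def)
        also have "((1/\<epsilon>) powr (1/\<theta>)) powr \<theta> = 1/\<epsilon>" using th ep
          by (simp add: powr_powr)
        finally have "P * \<bar>real q * y $ w - of_int (a $ w)\<bar> \<ge> 1/\<epsilon>"
          using Ps dist P1 by (smt (verit) mult_left_mono)
        then show ?thesis using big by blast
      next
        case False
        then have yY: "y \<in> Y" using y ys by (simp add: Y_def)
        have "(y, real q) \<in> Z" using yY q qQ by (simp add: Z_def)
        then have hc: "c \<le> (\<Sum>v\<in>UNIV. infdist (real q * y $ v) \<int>)"
          using c(2) by (force simp: h_def)
        have "\<exists>w. infdist (real q * y $ w) \<int> \<ge> c / N"
        proof (rule ccontr)
          assume "\<not> ?thesis"
          then have "\<And>w. infdist (real q * y $ w) \<int> < c / N" by (simp add: not_le)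
          then have "(\<Sum>v\<in>UNIV. infdist (real q * y $ v) \<int>) < (\<Sum>v\<in>(UNIV::'n set). c / N)"
            by (intro sum_strict_mono) auto
          also have "\<dots> = c" using N by (simp add: N_def)
          finally show False using hc by simp
        qed
        then obtain w where w: "infdist (real q * y $ w) \<int> \<ge> c / N" by blast
        have "infdist (real q * y $ w) \<int> \<le> dist (real q * y $ w) (of_int (a $ w))"
          by (rule infdist_le) simp
        then have d: "\<bar>real q * y $ w - of_int (a $ w)\<bar> \<ge> c / N" using w by (simp add: dist_real_def)
        have PN: "P \<ge> N / (c * \<epsilon>)" using P by (simp add: P0_def)
        have "P * (c / N) \<ge> N / (c * \<epsilon>) * (c / N)" using PN c N by (intro mult_right_mono) auto
        also have "N / (c * \<epsilon>) * (c / N) = 1/\<epsilon>" using c N ep by (simp add: field_simps)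
        finally have "P * \<bar>real q * y $ w - of_int (a $ w)\<bar> \<ge> 1/\<epsilon>"
          using d P1 by (smt (verit) mult_left_mono)
        then show ?thesis using big by blast
      qed
    qed
    then obtain w where "f w \<le> \<epsilon>" by blast
    then show "(\<Prod>v\<in>UNIV. inverse (real q + P * \<bar>real q * y $ v - of_int (a $ v)\<bar>)) \<le> \<epsilon>"
      using prod_le_factor[of f w, OF fb1] by (simp add: f_def)
  qed
qed


lemma FF_le:
  assumes "\<And>(q::nat) (a::int^'n). q \<ge> 1 \<Longrightarrow>
     (\<Prod>v\<in>UNIV. inverse (real q + P * \<bar>real q * (Lam *v \<alpha>) $ v - of_int (a $ v)\<bar>)) \<le> \<epsilon>"
  shows "FF (Lam :: real^'r^'n) \<alpha> P \<le> \<epsilon>"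
  unfolding FF_def
proof (rule cSup_least)
  let ?g = "\<lambda>(q::nat) (a::int^'n). (\<Prod>v\<in>UNIV. inverse (real q + P * \<bar>real q * (Lam *v \<alpha>) $ v - of_int (a $ v)\<bar>))"
  have "?g 1 0 \<in> {?g q a | q a. q \<ge> 1}" by blast
  then show "{?g q a | q a. q \<ge> 1} \<noteq> {}" by blast
  show "\<And>x. x \<in> {?g q a | q a. q \<ge> 1} \<Longrightarrow> x \<le> \<epsilon>" using assms by blast
qed

lemma FF_le_1:
  assumes "P \<ge> 0"
  shows "FF (Lam :: real^'r^'n) \<alpha> P \<le> 1"
proof (rule FF_le)
  fix q :: nat and a :: "int^'n" assume q: "q \<ge> 1"
  show "(\<Prod>v\<in>UNIV. inverse (real q + P * \<bar>real q * (Lam *v \<alpha>) $ v - of_int (a $ v)\<bar>)) \<le> 1"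
  proof (rule prod_le_1)
    fix v :: 'n
    have "0 \<le> inverse (real q + P * \<bar>real q * (Lam *v \<alpha>) $ v - of_int (a $ v)\<bar>) \<and>
       inverse (real q + P * \<bar>real q * (Lam *v \<alpha>) $ v - of_int (a $ v)\<bar>) \<le> 1 / real q"
      by (rule factor_bounds[OF q assms])
    moreover have "1 / real q \<le> 1" using q by simp
    ultimately show "0 \<le> inverse (real q + P * \<bar>real q * (Lam *v \<alpha>) $ v - of_int (a $ v)\<bar>) \<and>
       inverse (real q + P * \<bar>real q * (Lam *v \<alpha>) $ v - of_int (a $ v)\<bar>) \<le> 1" by linarith
  qed
qed

theorem mainTheorem8:
  fixes Lam :: "real ^ 'r ^ 'n"
  assumes irrat: "\<And>\<alpha>::real ^ 'r. \<alpha> \<noteq> 0 \<Longrightarrow> \<not> (\<forall>j. (Lam *v \<alpha>) $ j \<in> \<rat>)"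
  shows "\<exists>\<theta>0>0. \<forall>\<theta>. 0 < \<theta> \<and> \<theta> < \<theta>0 \<longrightarrow>
           (\<exists>T :: real \<Rightarrow> real.
              (\<forall>P\<ge>1. T P \<ge> 1) \<and> mono_on {1..} T \<and> filterlim T at_top at_top \<and>
              (\<forall>P\<ge>1. T P \<le> P powr \<theta>) \<and>
              (\<forall>P\<ge>1. \<forall>\<alpha>::real ^ 'r.
                  P powr (\<theta> - 1) \<le> supnorm (Lam *v \<alpha>) \<and> supnorm (Lam *v \<alpha>) \<le> T P
                  \<longrightarrow> FF Lam \<alpha> P \<le> inverse (T P)))"
proof (intro exI[of _ 1] conjI allI impI)
  show "(0::real) < 1" by simp
  fix \<theta> :: real assume "0 < \<theta> \<and> \<theta> < 1"
  then have th: "\<theta> > 0" by simp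
  define S where "S = range (\<lambda>\<alpha>. Lam *v \<alpha>)"
  have clS: "closed S" unfolding S_def
    by (intro closed_subspace linear_subspace_image[OF matrix_vector_mul_linear subspace_UNIV])
  have irrS: "\<exists>v. y$v \<notin> \<rat>" if yS: "y \<in> S" and y0: "y \<noteq> 0" for y
  proof -
    obtain \<alpha> where y: "y = Lam *v \<alpha>" using yS by (auto simp: S_def)
    have "\<alpha> \<noteq> 0" using y0 y by auto
    then show ?thesis using irrat y by blast
  qed
  have ex: "\<forall>k::nat. \<exists>P0. k \<ge> 1 \<longrightarrow> (P0 \<ge> 1 \<and> (\<forall>P\<ge>P0. \<forall>y\<in>S. P powr (\<theta>-1) \<le> supnorm y \<and> supnorm y \<le> real k \<longrightarrow>
           (\<forall>q::nat. q \<ge> 1 \<longrightarrow> (\<forall>a::int^'n.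
              (\<Prod>v\<in>UNIV. inverse (real q + P * \<bar>real q * y $ v - of_int (a $ v)\<bar>)) \<le> 1 / real k))))"
  proof
    fix k :: nat
    show "\<exists>P0. k \<ge> 1 \<longrightarrow> (P0 \<ge> 1 \<and> (\<forall>P\<ge>P0. \<forall>y\<in>S. P powr (\<theta>-1) \<le> supnorm y \<and> supnorm y \<le> real k \<longrightarrow>
           (\<forall>q::nat. q \<ge> 1 \<longrightarrow> (\<forall>a::int^'n.
              (\<Prod>v\<in>UNIV. inverse (real q + P * \<bar>real q * y $ v - of_int (a $ v)\<bar>)) \<le> 1 / real k))))"
    proof (cases "k \<ge> 1")
      case True
      then have "1 / real k > 0" by simp
      from key[OF clS irrS th this, of "real k"] show ?thesis by blast
    qed auto
  qed
  from choice[OF ex] obtain p where p: "\<And>k. k \<ge> 1 \<Longrightarrow> p k \<ge> 1 \<and> (\<forall>P\<ge>p k. \<forall>y\<in>S. P powr (\<theta>-1) \<le> supnorm y \<and> supnorm y \<le> real k \<longrightarrow>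
           (\<forall>q::nat. q \<ge> 1 \<longrightarrow> (\<forall>a::int^'n.
              (\<Prod>v\<in>UNIV. inverse (real q + P * \<bar>real q * y $ v - of_int (a $ v)\<bar>)) \<le> 1 / real k)))"
    by blast
  define pp where "pp k = (if k \<le> 1 then 1 else max (max (p k) (real k)) (real k powr (1/\<theta>)))" for k :: nat
  define K where "K P = {k. 1 \<le> k \<and> pp k \<le> P}" for P
  define T where "T P = real (Max (K P))" for P
  have ppk: "real k \<le> pp k" if "k \<ge> 1" for k
    using that by (auto simp: pp_def)
  have finK: "finite (K P)" for P
  proof -
    have "\<forall>k\<in>K P. k \<le> nat \<lfloor>P\<rfloor>"
    proof
      fix k assume "k \<in> K P"
      then have "real k \<le> P" using ppk by (force simp: K_def)
      then show "k \<le> nat \<lfloor>P\<rfloor>" by (rule le_nat_floor)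
    qed
    then show ?thesis using finite_nat_set_iff_bounded_le by blast
  qed
  have oneK: "1 \<in> K P" if "P \<ge> 1" for P using that by (simp add: K_def pp_def)
  have Kne: "K P \<noteq> {}" if "P \<ge> 1" for P using oneK[OF that] by blast
  have maxK: "Max (K P) \<in> K P" if "P \<ge> 1" for P using Max_in[OF finK Kne[OF that]] .
  have T1: "T P \<ge> 1" if "P \<ge> 1" for P
    using maxK[OF that] by (simp add: K_def T_def)
  have mono: "mono_on {1..} T"
  proof (rule mono_onI)
    fix P P' :: real assume "P \<in> {1..}" "P' \<in> {1..}" "P \<le> P'"
    then have "K P \<subseteq> K P'" "K P \<noteq> {}" using Kne by (auto simp: K_def)
    then have "Max (K P) \<le> Max (K P')" using finK by (intro Max_mono) auto
    then show "T P \<le> T P'" by (simp add: T_def)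
  qed
  have lim: "filterlim T at_top at_top"
    unfolding filterlim_at_top
  proof
    fix Z :: real
    define k where "k = nat \<lceil>Z\<rceil> + 1"
    have k1: "k \<ge> 1" by (simp add: k_def)
    have "eventually (\<lambda>P. P \<ge> max 1 (pp k)) at_top" by (rule eventually_ge_at_top)
    then show "eventually (\<lambda>P. Z \<le> T P) at_top"
    proof (rule eventually_mono)
      fix P assume P: "max 1 (pp k) \<le> P"
      then have "k \<in> K P" using k1 by (simp add: K_def)
      then have "k \<le> Max (K P)" using finK by simp
      moreover have "Z \<le> real k" unfolding k_def by linarith
      ultimately show "Z \<le> T P" by (simp add: T_def)
    qed
  qed
  have Tpow: "T P \<le> P powr \<theta>" if P1: "P \<ge> 1" for P
  proof -
    define k where "k = Max (K P)"
    have kK: "k \<in> K P" using maxK[OF P1] by (simp add: k_def)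
    show ?thesis
    proof (cases "k \<le> 1")
      case True
      then have "T P \<le> 1" by (simp add: T_def k_def)
      also have "1 \<le> P powr \<theta>" using P1 th by (intro ge_one_powr_ge_zero) auto
      finally show ?thesis .
    next
      case False
      then have "real k powr (1/\<theta>) \<le> P" using kK by (auto simp: K_def pp_def)
      then have "(real k powr (1/\<theta>)) powr \<theta> \<le> P powr \<theta>" using th by (intro powr_mono2) auto
      moreover have "(real k powr (1/\<theta>)) powr \<theta> = real k" using th False by (simp add: powr_powr)
      ultimately show ?thesis by (simp add: T_def k_def)
    qed
  qed
  have Tbound: "FF Lam \<alpha> P \<le> inverse (T P)"
    if P1: "P \<ge> 1" and rng: "P powr (\<theta> - 1) \<le> supnorm (Lam *v \<alpha>) \<and> supnorm (Lam *v \<alpha>) \<le> T P" for P \<alpha>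
  proof -
    define k where "k = Max (K P)"
    have kK: "k \<in> K P" using maxK[OF P1] by (simp add: k_def)
    show ?thesis
    proof (cases "k \<le> 1")
      case True
      then have "T P = 1" using kK by (simp add: T_def k_def K_def)
      then show ?thesis using FF_le_1[of P] P1 by simp
    next
      case False
      then have Pp: "p k \<le> P" using kK by (auto simp: K_def pp_def)
      have k1: "k \<ge> 1" using False by simp
      have yS: "Lam *v \<alpha> \<in> S" by (simp add: S_def)
      have rng': "P powr (\<theta>-1) \<le> supnorm (Lam *v \<alpha>) \<and> supnorm (Lam *v \<alpha>) \<le> real k"
        using rng by (simp add: T_def k_def)
      have "FF Lam \<alpha> P \<le> 1 / real k"
        by (rule FF_le) (use p[OF k1] Pp yS rng' in blast)
      then show ?thesis by (simp add: T_def k_def inverse_eq_divide)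
    qed
  qed
  show "\<exists>T :: real \<Rightarrow> real.
              (\<forall>P\<ge>1. T P \<ge> 1) \<and> mono_on {1..} T \<and> filterlim T at_top at_top \<and>
              (\<forall>P\<ge>1. T P \<le> P powr \<theta>) \<and>
              (\<forall>P\<ge>1. \<forall>\<alpha>::real ^ 'r.
                  P powr (\<theta> - 1) \<le> supnorm (Lam *v \<alpha>) \<and> supnorm (Lam *v \<alpha>) \<le> T P
                  \<longrightarrow> FF Lam \<alpha> P \<le> inverse (T P))"
    using T1 mono lim Tpow Tbound by blast
qed

end
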